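(* Let $(W,W')$ be random vectors in $\mathbb{Z}^d$ such that $(W,W')$ and $(W',W)$ have the same distribution, with $\mathbb{E}|W'-W|^2<\infty$. Put $\xi:=W'-W$, let $\mathcal J:=\{J\in\mathbb{Z}^d: q^J:=\mathbb{P}[\xi=J]>0\}$, and suppose that for each $1\le j\le d$ there are $J^{(j)}_1,\dots,J^{(j)}_{r(j)}\in\mathcal J$ with $\sum_{l=1}^{r(j)}J^{(j)}_l=e^{(j)}$ (fixed choices). For $Q^J(W):=\mathbb{P}[\xi=J\mid W]$ let $u^J:=(q^J)^{-1}\mathbb{E}|Q^J(W)-q^J|$, $\tilde u_j:=\sum_{l=1}^{r(j)}(u^{J^{(j)}_l}+u^{-J^{(j)}_l})$, $\tilde u^*:=\max_j\tilde u_j$ and $u^*:=\sup_{J\in\mathcal J}u^J$. Then for each $1\le j\le d$ and each $J\in\mathcal J$: (i) $d_{TV}(\mathcal{L}(W+e^{(j)}),\mathcal{L}(W))\le\tilde u_j\le\tilde u^*$; (ii) $d_{TV}(\mathcal{L}(W+e^{(j)}\mid\xi=J),\mathcal{L}(W\mid\xi=J))\le\tilde u_j+2u^J\le\tilde u^*+2u^*$. Furthermore, with $\sigma^2:=\mathbb{E}\{\xi\xi^T\}$ and $R_2(W):=\mathbb{E}\{\xi\xi^T\mid W\}-\sigma^2$, (iii) $\mathbb{E}\|R_2(W)\|_1\le d\,\mathrm{Tr}(\sigma^2)\,u^*$.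
   Context: $\|M\|_1:=\sum_{i,j}|M_{ij}|$; $e^{(j)}$ is the $j$-th coordinate vector. (By exchangeability, $q^{-J}=q^J$, so $-J\in\mathcal J$ whenever $J\in\mathcal J$.) *)

theory Defs
  imports "HOL-Analysis.Analysis" "HOL-Probability.Probability"
begin

text \<open>The joint law of the pair (W, W') of random vectors in Z^d is a pmf P on
  pairs of integer vectors indexed by a finite type 'd (so d = CARD('d)).\<close>

definition xi :: "(int^'d) \<times> (int^'d) \<Rightarrow> int^'d" where
  "xi x = snd x - fst x"

definition unitv :: "'d::finite \<Rightarrow> int^'d" where
  "unitv j = (\<chi> i. if i = j then 1 else 0)"

definition lawW :: "((int^'d) \<times> (int^'d)) pmf \<Rightarrow> (int^'d) pmf" where
  "lawW P = map_pmf fst P"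

definition qJ :: "((int^'d) \<times> (int^'d)) pmf \<Rightarrow> int^'d \<Rightarrow> real" where
  "qJ P J = measure_pmf.prob P {x. xi x = J}"

definition calJ :: "((int^'d) \<times> (int^'d)) pmf \<Rightarrow> (int^'d) set" where
  "calJ P = {J. qJ P J > 0}"

text \<open>Conditional law of the pair given W = w (meaningful for w in the support of W).\<close>
definition condW :: "((int^'d) \<times> (int^'d)) pmf \<Rightarrow> int^'d \<Rightarrow> ((int^'d) \<times> (int^'d)) pmf" where
  "condW P w = cond_pmf P {x. fst x = w}"

definition QJ :: "((int^'d) \<times> (int^'d)) pmf \<Rightarrow> int^'d \<Rightarrow> int^'d \<Rightarrow> real" where
  "QJ P J w = measure_pmf.prob (condW P w) {x. xi x = J}"

definition uJ :: "((int^'d) \<times> (int^'d)) pmf \<Rightarrow> int^'d \<Rightarrow> real" where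
  "uJ P J = (1 / qJ P J) * measure_pmf.expectation (lawW P) (\<lambda>w. \<bar>QJ P J w - qJ P J\<bar>)"

text \<open>tilde u_j for the fixed choices Jsel j = [J^(j)_1, ..., J^(j)_r(j)]\<close>
definition utilde :: "((int^'d) \<times> (int^'d)) pmf \<Rightarrow> ('d \<Rightarrow> (int^'d) list) \<Rightarrow> 'd \<Rightarrow> real" where
  "utilde P Jsel j = sum_list (map (\<lambda>J. uJ P J + uJ P (- J)) (Jsel j))"

definition utilde_star :: "((int^'d::finite) \<times> (int^'d)) pmf \<Rightarrow> ('d \<Rightarrow> (int^'d) list) \<Rightarrow> real" where
  "utilde_star P Jsel = Max (range (utilde P Jsel))"

definition ustar :: "((int^'d) \<times> (int^'d)) pmf \<Rightarrow> real" where
  "ustar P = Sup (uJ P ` calJ P)"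

definition dTV :: "'a pmf \<Rightarrow> 'a pmf \<Rightarrow> real" where
  "dTV p q = (SUP A. \<bar>measure_pmf.prob p A - measure_pmf.prob q A\<bar>)"

definition sigma2 :: "((int^'d) \<times> (int^'d)) pmf \<Rightarrow> 'd \<Rightarrow> 'd \<Rightarrow> real" where
  "sigma2 P i k = measure_pmf.expectation P (\<lambda>x. real_of_int ((xi x) $ i * (xi x) $ k))"

definition R2 :: "((int^'d) \<times> (int^'d)) pmf \<Rightarrow> int^'d \<Rightarrow> 'd \<Rightarrow> 'd \<Rightarrow> real" where
  "R2 P w i k = measure_pmf.expectation (condW P w) (\<lambda>x. real_of_int ((xi x) $ i * (xi x) $ k))
                 - sigma2 P i k"

definition norm1 :: "('d::finite \<Rightarrow> 'd \<Rightarrow> real) \<Rightarrow> real" where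
  "norm1 M = (\<Sum>i\<in>UNIV. \<Sum>k\<in>UNIV. \<bar>M i k\<bar>)"

definition trace_mat :: "('d::finite \<Rightarrow> 'd \<Rightarrow> real) \<Rightarrow> real" where
  "trace_mat M = (\<Sum>i\<in>UNIV. M i i)"

end

theory Submission imports Defs begin

lemma measure_cond:
  assumes "set_pmf p \<inter> s \<noteq> {}"
  shows "measure (cond_pmf p s) A = measure p (s \<inter> A) / measure p s"
proof -
  have "emeasure (measure_pmf p) s \<noteq> 0"
    using assms by (simp add: measure_pmf.emeasure_eq_measure measure_pmf_zero_iff)
  then show ?thesis using assms
    by (simp add: cond_pmf.rep_eq measure_pmf.emeasure_eq_measure)
qed

lemma bind_condW: "bind_pmf (lawW P) (condW P) = P"
  unfolding condW_def lawW_def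
  by (rule bind_cond_pmf_cancel) (auto simp: eq_commute vimage_def)

lemma bint: "(\<And>x. \<bar>f x\<bar> \<le> B) \<Longrightarrow> integrable (measure_pmf p) (f::_\<Rightarrow>real)"
  by (rule measure_pmf.integrable_const_bound[where B=B]) auto

lemma QJ_bounds: "0 \<le> QJ P J w" "QJ P J w \<le> 1"
  by (auto simp: QJ_def)

lemma qJ_bounds: "0 \<le> qJ P J" "qJ P J \<le> 1"
  by (auto simp: qJ_def)

lemma absQq: "\<bar>QJ P J w - qJ P J\<bar> \<le> 1"
  using QJ_bounds[of P J w] qJ_bounds[of P J] by (simp add: abs_le_iff)

definition DJ where "DJ P J = measure_pmf.expectation (lawW P) (\<lambda>w. \<bar>QJ P J w - qJ P J\<bar>)"


lemma integrable_cond: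
  fixes f :: "'a \<Rightarrow> real"
  assumes ne: "set_pmf p \<inter> s \<noteq> {}" and f: "integrable (measure_pmf p) f"
  shows "integrable (measure_pmf (cond_pmf p s)) f"
proof -
  define c where "c = measure p s"
  have c: "c > 0" using ne measure_pmf_zero_iff[of p s] measure_nonneg[of p s] unfolding c_def by linarith
  have le: "ennreal (pmf (cond_pmf p s) x) \<le> ennreal (1 / c) * ennreal (pmf p x)" for x
    using c by (simp add: pmf_cond[OF ne] c_def ennreal_mult'[symmetric] pmf_nonneg)
  have "(\<integral>\<^sup>+ x. ennreal (norm (f x)) \<partial>cond_pmf p s) = (\<integral>\<^sup>+ x. ennreal (pmf (cond_pmf p s) x) * ennreal (norm (f x)) \<partial>count_space UNIV)"
    by (rule nn_integral_measure_pmf)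
  also have "\<dots> \<le> (\<integral>\<^sup>+ x. ennreal (1 / c) * (ennreal (pmf p x) * ennreal (norm (f x))) \<partial>count_space UNIV)"
    by (rule nn_integral_mono) (metis le mult.assoc mult_right_mono zero_le)
  also have "\<dots> = ennreal (1 / c) * (\<integral>\<^sup>+ x. ennreal (pmf p x) * ennreal (norm (f x)) \<partial>count_space UNIV)"
    by (rule nn_integral_cmult) simp
  also have "\<dots> = ennreal (1 / c) * (\<integral>\<^sup>+ x. ennreal (norm (f x)) \<partial>p)"
    by (simp add: nn_integral_measure_pmf)
  also have "\<dots> < \<infinity>"
    using f by (simp add: integrable_iff_bounded ennreal_mult_less_top)
  finally show ?thesis
    by (simp add: integrable_iff_bounded)
qed

lemma diff_pmf_integral:
  fixes h :: "'a \<Rightarrow> real"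
  assumes "integrable (measure_pmf \<mu>) h" "integrable (measure_pmf \<nu>) h"
  shows "ennreal \<bar>measure_pmf.expectation \<mu> h - measure_pmf.expectation \<nu> h\<bar>
     \<le> (\<integral>\<^sup>+ J. ennreal (\<bar>h J\<bar> * \<bar>pmf \<mu> J - pmf \<nu> J\<bar>) \<partial>count_space UNIV)"
proof -
  have i1: "integrable (count_space UNIV) (\<lambda>x. pmf \<mu> x * h x)"
    using assms(1) by (subst (asm) measure_pmf_eq_density) (simp add: integrable_density)
  have i2: "integrable (count_space UNIV) (\<lambda>x. pmf \<nu> x * h x)"
    using assms(2) by (subst (asm) measure_pmf_eq_density) (simp add: integrable_density)
  have e1: "measure_pmf.expectation \<mu> h = integral\<^sup>L (count_space UNIV) (\<lambda>x. pmf \<mu> x * h x)"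
    by (subst measure_pmf_eq_density) (simp add: integral_density)
  have e2: "measure_pmf.expectation \<nu> h = integral\<^sup>L (count_space UNIV) (\<lambda>x. pmf \<nu> x * h x)"
    by (subst measure_pmf_eq_density) (simp add: integral_density)
  have i3: "integrable (count_space UNIV) (\<lambda>x. \<bar>pmf \<mu> x * h x - pmf \<nu> x * h x\<bar>)"
    using i1 i2 by auto
  have "\<bar>measure_pmf.expectation \<mu> h - measure_pmf.expectation \<nu> h\<bar>
     = \<bar>integral\<^sup>L (count_space UNIV) (\<lambda>x. pmf \<mu> x * h x - pmf \<nu> x * h x)\<bar>"
    by (simp add: e1 e2 Bochner_Integration.integral_diff[OF i1 i2])
  also have "\<dots> \<le> integral\<^sup>L (count_space UNIV) (\<lambda>x. \<bar>pmf \<mu> x * h x - pmf \<nu> x * h x\<bar>)"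
    by (rule integral_abs_bound)
  finally have "ennreal \<bar>measure_pmf.expectation \<mu> h - measure_pmf.expectation \<nu> h\<bar>
     \<le> ennreal (integral\<^sup>L (count_space UNIV) (\<lambda>x. \<bar>pmf \<mu> x * h x - pmf \<nu> x * h x\<bar>))"
    by (rule ennreal_leI)
  also have "\<dots> = (\<integral>\<^sup>+ x. ennreal \<bar>pmf \<mu> x * h x - pmf \<nu> x * h x\<bar> \<partial>count_space UNIV)"
    by (rule nn_integral_eq_integral[symmetric]) (use i3 in auto)
  also have "\<dots> = (\<integral>\<^sup>+ J. ennreal (\<bar>h J\<bar> * \<bar>pmf \<mu> J - pmf \<nu> J\<bar>) \<partial>count_space UNIV)"
    by (rule nn_integral_cong) (simp add: abs_mult[symmetric] algebra_simps)
  finally show ?thesis .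
qed
lemma absab: "\<bar>(a::real) * b\<bar> \<le> (a^2 + b^2) / 2"
proof -
  have "0 \<le> (\<bar>a\<bar> - \<bar>b\<bar>)^2" by simp
  then show ?thesis by (simp add: power2_eq_square abs_mult algebra_simps)
qed

lemma prodsum:
  fixes v :: "int^'d::finite"
  shows "(\<Sum>i\<in>UNIV. \<Sum>k\<in>UNIV. \<bar>real_of_int (v$i * v$k)\<bar>) \<le> real CARD('d) * (\<Sum>l\<in>UNIV. (real_of_int (v$l))^2)"
proof -
  have "(\<Sum>i\<in>UNIV. \<Sum>k\<in>UNIV. \<bar>real_of_int (v$i * v$k)\<bar>) \<le> (\<Sum>i\<in>UNIV. \<Sum>k\<in>UNIV. ((real_of_int (v$i))^2 + (real_of_int (v$k))^2) / 2)"
    by (intro sum_mono) (use absab in simp)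
  also have "\<dots> = real CARD('d) * (\<Sum>l\<in>UNIV. (real_of_int (v$l))^2)"
    by (simp add: sum.distrib sum_divide_distrib[symmetric] add_divide_distrib sum_distrib_left[symmetric] sum_distrib_right[symmetric] )
  finally show ?thesis .
qed

lemma prodbound:
  fixes v :: "int^'d::finite"
  shows "\<bar>real_of_int (v$i * v$k)\<bar> \<le> (\<Sum>l\<in>UNIV. (real_of_int (v$l))^2)"
proof (cases "i = k")
  case True
  then show ?thesis using member_le_sum[of k UNIV "\<lambda>l. (real_of_int (v$l))^2"] by (simp add: power2_eq_square)
next
  case False
  have "\<bar>real_of_int (v$i * v$k)\<bar> \<le> (real_of_int (v$i))^2 + (real_of_int (v$k))^2"
    using absab[of "real_of_int (v$i)" "real_of_int (v$k)"] by simp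
  also have "\<dots> = (\<Sum>l\<in>{i,k}. (real_of_int (v$l))^2)" using False by simp
  also have "\<dots> \<le> (\<Sum>l\<in>UNIV. (real_of_int (v$l))^2)" by (rule sum_mono2) auto
  finally show ?thesis .
qed

context fixes P :: "((int^'d::finite) \<times> (int^'d)) pmf" begin

lemma tower: "measure P S = measure_pmf.expectation (lawW P) (\<lambda>w. measure (condW P w) S)"
proof -
  have "ennreal (measure P S) = emeasure (bind_pmf (lawW P) (condW P)) S"
    by (simp add: bind_condW measure_pmf.emeasure_eq_measure)
  also have "\<dots> = (\<integral>\<^sup>+w. ennreal (measure (condW P w) S) \<partial>lawW P)"
    unfolding measure_pmf.emeasure_eq_measure[symmetric] by (rule emeasure_bind_pmf)
  also have "\<dots> = ennreal (measure_pmf.expectation (lawW P) (\<lambda>w. measure (condW P w) S))"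
    by (rule nn_integral_eq_integral) (auto intro!: bint[where B=1])
  finally show ?thesis by (simp add: integral_nonneg_AE)
qed

lemma set_lawW: "set_pmf (lawW P) = fst ` set_pmf P"
  by (simp add: lawW_def)

lemma condW_meas:
  assumes "w \<in> set_pmf (lawW P)"
  shows "measure (condW P w) S = measure P ({x. fst x = w} \<inter> S) / measure P {x. fst x = w}"
  unfolding condW_def using assms by (intro measure_cond) (auto simp: set_lawW)


lemma E1: "measure P {x. fst x \<in> A \<and> xi x = J}
   = measure_pmf.expectation (lawW P) (\<lambda>w. indicator A w * QJ P J w)"
proof -
  have "measure P {x. fst x \<in> A \<and> xi x = J}
      = measure_pmf.expectation (lawW P) (\<lambda>w. measure (condW P w) {x. fst x \<in> A \<and> xi x = J})"
    by (rule tower)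
  also have "\<dots> = measure_pmf.expectation (lawW P) (\<lambda>w. indicator A w * QJ P J w)"
  proof (rule integral_cong_AE)
    show "AE w in measure_pmf (lawW P). measure (condW P w) {x. fst x \<in> A \<and> xi x = J} = indicator A w * QJ P J w"
      unfolding AE_measure_pmf_iff
    proof (intro ballI)
      fix w assume w: "w \<in> set_pmf (lawW P)"
      have "{x. fst x = w} \<inter> {x. fst x \<in> A \<and> xi x = J} = (if w \<in> A then {x. fst x = w} \<inter> {x. xi x = J} else {})"
        by auto
      then show "measure (condW P w) {x. fst x \<in> A \<and> xi x = J} = indicator A w * QJ P J w"
        unfolding QJ_def using condW_meas[OF w] by (simp add: indicator_def)
    qed
  qed auto
  finally show ?thesis .
qed


lemma EA:
  "\<bar>measure P {x. fst x \<in> A \<and> xi x = J} - qJ P J * measure P {x. fst x \<in> A}\<bar> \<le> DJ P J"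
proof -
  have m: "measure P {x. fst x \<in> A} = measure (lawW P) A"
    by (simp add: lawW_def vimage_def)
  have i1: "integrable (measure_pmf (lawW P)) (\<lambda>w. indicator A w * QJ P J w)"
    by (rule bint[where B=1]) (auto simp: QJ_bounds indicator_def abs_le_iff intro: order_trans[OF _ QJ_bounds(2)])
  have i2: "integrable (measure_pmf (lawW P)) (\<lambda>w. indicator A w * qJ P J)"
    by (rule bint[where B=1]) (auto simp: qJ_bounds indicator_def)
  have i3: "integrable (measure_pmf (lawW P)) (\<lambda>w. \<bar>QJ P J w - qJ P J\<bar>)"
    by (rule bint[where B=1]) (simp add: absQq)
  have "qJ P J * measure (lawW P) A = measure_pmf.expectation (lawW P) (\<lambda>w. indicator A w * qJ P J)"
    by simp
  then have "measure P {x. fst x \<in> A \<and> xi x = J} - qJ P J * measure P {x. fst x \<in> A}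
     = measure_pmf.expectation (lawW P) (\<lambda>w. indicator A w * QJ P J w - indicator A w * qJ P J)"
    using E1[of A J] m by (simp add: Bochner_Integration.integral_diff[OF i1 i2])
  also have "\<bar>\<dots>\<bar> \<le> measure_pmf.expectation (lawW P) (\<lambda>w. \<bar>indicator A w * QJ P J w - indicator A w * qJ P J\<bar>)"
    by (rule integral_abs_bound)
  also have "\<dots> \<le> DJ P J"
    unfolding DJ_def
    by (rule integral_mono) (auto intro!: i3 bint[where B=1] simp: indicator_def absQq)
  finally show ?thesis .
qed


lemma E1_univ: "qJ P J = measure_pmf.expectation (lawW P) (QJ P J)"
  using E1[of UNIV J] by (simp add: qJ_def)

lemma DJ_le: "DJ P J \<le> 2 * qJ P J"
proof -
  have "DJ P J \<le> measure_pmf.expectation (lawW P) (\<lambda>w. QJ P J w + qJ P J)"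
    unfolding DJ_def
  proof (rule integral_mono)
    show "integrable (measure_pmf (lawW P)) (\<lambda>w. \<bar>QJ P J w - qJ P J\<bar>)"
      by (rule bint[where B=1]) (simp add: absQq)
    show "integrable (measure_pmf (lawW P)) (\<lambda>w. QJ P J w + qJ P J)"
    proof (rule bint[where B=2])
      fix w show "\<bar>QJ P J w + qJ P J\<bar> \<le> 2" using QJ_bounds[of P J w] qJ_bounds[of P J] by simp
    qed
    fix w show "\<bar>QJ P J w - qJ P J\<bar> \<le> QJ P J w + qJ P J" using QJ_bounds[of P J w] qJ_bounds[of P J] by simp
  qed
  also have "\<dots> = 2 * qJ P J"
    by (subst Bochner_Integration.integral_add) (auto intro!: bint[where B=1] simp: QJ_bounds qJ_bounds abs_le_iff
        E1_univ[symmetric])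
  finally show ?thesis .
qed

lemma DJ_nonneg: "0 \<le> DJ P J"
  unfolding DJ_def by simp

lemma uJ_DJ: "uJ P J = DJ P J / qJ P J"
  unfolding uJ_def DJ_def by simp

lemma uJ_le2: "uJ P J \<le> 2"
  using DJ_le[of J] qJ_bounds[of P J] DJ_nonneg[of J]
  by (cases "qJ P J = 0") (auto simp: uJ_DJ divide_le_eq)

lemma uJ_nonneg: "0 \<le> uJ P J"
  using qJ_bounds[of P J] DJ_nonneg[of J] by (simp add: uJ_DJ)

lemma uJ_le_ustar: "J \<in> calJ P \<Longrightarrow> uJ P J \<le> ustar P"
  unfolding ustar_def
  by (rule cSup_upper) (auto intro: bdd_aboveI[where M=2] simp: uJ_le2)


lemma DJ_le_star: "DJ P J \<le> qJ P J * ustar P"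
proof (cases "J \<in> calJ P")
  case True
  then have q: "qJ P J > 0" by (simp add: calJ_def)
  have "DJ P J = qJ P J * uJ P J" using q by (simp add: uJ_DJ)
  also have "\<dots> \<le> qJ P J * ustar P" using q uJ_le_ustar[OF True] by simp
  finally show ?thesis .
next
  case False
  then have "qJ P J = 0" using qJ_bounds[of P J] by (simp add: calJ_def)
  then show ?thesis using DJ_le[of J] DJ_nonneg[of J] by simp
qed

lemma pmf_map_xi_cond: "pmf (map_pmf xi (condW P w)) J = QJ P J w"
  by (simp add: pmf_map QJ_def vimage_def)

lemma pmf_map_xi: "pmf (map_pmf xi P) J = qJ P J"
  by (simp add: pmf_map qJ_def vimage_def)

lemma nnDJ: "(\<integral>\<^sup>+ w. ennreal \<bar>QJ P J w - qJ P J\<bar> \<partial>lawW P) = ennreal (DJ P J)"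
  unfolding DJ_def by (rule nn_integral_eq_integral) (auto intro!: bint[where B=1] simp: absQq)

context assumes sm: "integrable (measure_pmf P) (\<lambda>x. \<Sum>i\<in>UNIV. (real_of_int ((xi x) $ i))^2)"
begin

lemma intP: "integrable (measure_pmf P) (\<lambda>x. real_of_int ((xi x)$i * (xi x)$k))"
proof (rule Bochner_Integration.integrable_bound[OF sm])
  show "AE x in measure_pmf P. norm (real_of_int ((xi x)$i * (xi x)$k)) \<le> norm (\<Sum>i\<in>UNIV. (real_of_int ((xi x) $ i))^2)"
    using prodbound by (auto intro!: AE_I2 simp: sum_nonneg)
qed simp

lemma Ept:
  assumes w: "w \<in> set_pmf (lawW P)"
  shows "ennreal \<bar>R2 P w i k\<bar> \<le> (\<integral>\<^sup>+ J. ennreal (\<bar>real_of_int (J$i * J$k)\<bar> * \<bar>QJ P J w - qJ P J\<bar>) \<partial>count_space UNIV)"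
proof -
  define h where "h = (\<lambda>J::int^'d. real_of_int (J$i * J$k))"
  have ne: "set_pmf P \<inter> {x. fst x = w} \<noteq> {}" using w by (auto simp: set_lawW)
  have r: "R2 P w i k = measure_pmf.expectation (map_pmf xi (condW P w)) h - measure_pmf.expectation (map_pmf xi P) h"
    by (simp add: R2_def sigma2_def h_def)
  have i1: "integrable (measure_pmf (map_pmf xi (condW P w))) h"
    unfolding integrable_map_pmf_eq condW_def h_def by (rule integrable_cond[OF ne intP])
  have i2: "integrable (measure_pmf (map_pmf xi P)) h"
    unfolding integrable_map_pmf_eq h_def by (rule intP)
  show ?thesis
    using diff_pmf_integral[OF i1 i2] unfolding r pmf_map_xi_cond pmf_map_xi h_def .
qed


lemma trace_eq: "trace_mat (sigma2 P) = measure_pmf.expectation P (\<lambda>x. \<Sum>i\<in>UNIV. (real_of_int ((xi x) $ i))^2)"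
  unfolding trace_mat_def sigma2_def
  by (subst Bochner_Integration.integral_sum) (auto intro!: intP[simplified] simp: power2_eq_square)

lemma main3:
  assumes us: "0 \<le> ustar P"
  shows "(\<integral>\<^sup>+ w. ennreal (norm1 (R2 P w)) \<partial>lawW P) \<le> ennreal (real CARD('d) * trace_mat (sigma2 P) * ustar P)"
proof -
  define F where "F = (\<lambda>i k (J::int^'d) w. ennreal (\<bar>real_of_int (J$i * J$k)\<bar> * \<bar>QJ P J w - qJ P J\<bar>))"
  define S where "S = (\<lambda>J::int^'d. \<Sum>l\<in>UNIV. (real_of_int (J $ l))^2)"
  have "(\<integral>\<^sup>+ w. ennreal (norm1 (R2 P w)) \<partial>lawW P) \<le> (\<integral>\<^sup>+ w. (\<Sum>i\<in>UNIV. \<Sum>k\<in>UNIV. \<integral>\<^sup>+ J. F i k J w \<partial>count_space UNIV) \<partial>lawW P)"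
  proof (rule nn_integral_mono_AE)
    show "AE w in measure_pmf (lawW P). ennreal (norm1 (R2 P w)) \<le> (\<Sum>i\<in>UNIV. \<Sum>k\<in>UNIV. \<integral>\<^sup>+ J. F i k J w \<partial>count_space UNIV)"
      unfolding AE_measure_pmf_iff
    proof
      fix w assume w: "w \<in> set_pmf (lawW P)"
      have "ennreal (norm1 (R2 P w)) = (\<Sum>i\<in>UNIV. \<Sum>k\<in>UNIV. ennreal \<bar>R2 P w i k\<bar>)"
        unfolding norm1_def by (simp add: sum_nonneg)
      also have "\<dots> \<le> (\<Sum>i\<in>UNIV. \<Sum>k\<in>UNIV. \<integral>\<^sup>+ J. F i k J w \<partial>count_space UNIV)"
        unfolding F_def by (intro sum_mono Ept[OF w])
      finally show "ennreal (norm1 (R2 P w)) \<le> (\<Sum>i\<in>UNIV. \<Sum>k\<in>UNIV. \<integral>\<^sup>+ J. F i k J w \<partial>count_space UNIV)" .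
    qed
  qed
  also have "\<dots> = (\<Sum>i\<in>UNIV. \<Sum>k\<in>UNIV. \<integral>\<^sup>+ w. \<integral>\<^sup>+ J. F i k J w \<partial>count_space UNIV \<partial>lawW P)"
    by (simp add: nn_integral_sum)
  also have "\<dots> = (\<Sum>i\<in>UNIV. \<Sum>k\<in>UNIV. \<integral>\<^sup>+ J. \<integral>\<^sup>+ w. F i k J w \<partial>lawW P \<partial>count_space UNIV)"
    by (intro sum.cong refl nn_integral_count_space_nn_integral) auto
  also have "\<dots> \<le> (\<Sum>i\<in>UNIV. \<Sum>k\<in>UNIV. \<integral>\<^sup>+ J. ennreal (\<bar>real_of_int (J$i * J$k)\<bar> * (qJ P J * ustar P)) \<partial>count_space UNIV)"
  proof (intro sum_mono nn_integral_mono)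
    fix i k J
    have "(\<integral>\<^sup>+ w. F i k J w \<partial>lawW P) = (\<integral>\<^sup>+ w. ennreal \<bar>real_of_int (J$i * J$k)\<bar> * ennreal \<bar>QJ P J w - qJ P J\<bar> \<partial>lawW P)"
      unfolding F_def by (simp add: ennreal_mult)
    also have "\<dots> = ennreal \<bar>real_of_int (J$i * J$k)\<bar> * ennreal (DJ P J)"
      by (simp add: nn_integral_cmult nnDJ)
    also have "\<dots> = ennreal (\<bar>real_of_int (J$i * J$k)\<bar> * DJ P J)"
      using DJ_nonneg[of J] by (simp add: ennreal_mult)
    also have "\<dots> \<le> ennreal (\<bar>real_of_int (J$i * J$k)\<bar> * (qJ P J * ustar P))"
      by (intro ennreal_leI mult_left_mono DJ_le_star) simp
    finally show "(\<integral>\<^sup>+ w. F i k J w \<partial>lawW P) \<le> ennreal (\<bar>real_of_int (J$i * J$k)\<bar> * (qJ P J * ustar P))" .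
  qed
  also have "\<dots> = (\<integral>\<^sup>+ J. (\<Sum>i\<in>UNIV. \<Sum>k\<in>UNIV. ennreal (\<bar>real_of_int (J$i * J$k)\<bar> * (qJ P J * ustar P))) \<partial>count_space UNIV)"
    by (simp add: nn_integral_sum)
  also have "\<dots> \<le> (\<integral>\<^sup>+ J. ennreal (qJ P J) * ennreal (ustar P * real CARD('d) * S J) \<partial>count_space UNIV)"
  proof (rule nn_integral_mono)
    fix J :: "int^'d"
    have q: "0 \<le> qJ P J" by (simp add: qJ_bounds)
    have "(\<Sum>i\<in>UNIV. \<Sum>k\<in>UNIV. ennreal (\<bar>real_of_int (J$i * J$k)\<bar> * (qJ P J * ustar P)))
       = ennreal (\<Sum>i\<in>UNIV. \<Sum>k\<in>UNIV. \<bar>real_of_int (J$i * J$k)\<bar> * (qJ P J * ustar P))"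
      using q us by (simp add: sum_nonneg)
    also have "\<dots> = ennreal ((qJ P J * ustar P) * (\<Sum>i\<in>UNIV. \<Sum>k\<in>UNIV. \<bar>real_of_int (J$i * J$k)\<bar>))"
      by (simp add: sum_distrib_left sum_distrib_right mult.commute)
    also have "\<dots> \<le> ennreal ((qJ P J * ustar P) * (real CARD('d) * S J))"
      unfolding S_def using q us by (intro ennreal_leI mult_left_mono prodsum) auto
    also have "\<dots> = ennreal (qJ P J) * ennreal (ustar P * real CARD('d) * S J)"
      using q us by (simp add: ennreal_mult'[symmetric] S_def sum_nonneg mult_ac)
    finally show "(\<Sum>i\<in>UNIV. \<Sum>k\<in>UNIV. ennreal (\<bar>real_of_int (J$i * J$k)\<bar> * (qJ P J * ustar P)))
       \<le> ennreal (qJ P J) * ennreal (ustar P * real CARD('d) * S J)" .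
  qed
  also have "\<dots> = (\<integral>\<^sup>+ J. ennreal (ustar P * real CARD('d) * S J) \<partial>map_pmf xi P)"
    by (simp add: nn_integral_measure_pmf pmf_map_xi)
  also have "\<dots> = (\<integral>\<^sup>+ x. ennreal (ustar P * real CARD('d) * S (xi x)) \<partial>P)"
    by simp
  also have "\<dots> = ennreal (measure_pmf.expectation P (\<lambda>x. ustar P * real CARD('d) * S (xi x)))"
    unfolding S_def using us by (intro nn_integral_eq_integral) (auto intro!: sm sum_nonneg AE_I2 mult_nonneg_nonneg)
  also have "\<dots> = ennreal (real CARD('d) * trace_mat (sigma2 P) * ustar P)"
    by (simp add: trace_eq S_def mult_ac)
  finally show ?thesis .
qed

end

context assumes exch: "map_pmf (\<lambda>(w, w'). (w', w)) P = P"
begin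

lemma exch_meas: "measure P {x. fst x \<in> A \<and> xi x = J} = measure P {x. fst x \<in> {v. v - J \<in> A} \<and> xi x = - J}"
proof -
  have "measure P {x. fst x \<in> A \<and> xi x = J} = measure (map_pmf (\<lambda>(w, w'). (w', w)) P) {x. fst x \<in> A \<and> xi x = J}"
    by (simp add: exch)
  also have "\<dots> = measure P ((\<lambda>(w, w'). (w', w)) -` {x. fst x \<in> A \<and> xi x = J})"
    by simp
  also have "(\<lambda>(w, w'). (w', w)) -` {x. fst x \<in> A \<and> xi x = J} = {x. fst x \<in> {v. v - J \<in> A} \<and> xi x = - J}"
    by (auto simp: xi_def algebra_simps)
  finally show ?thesis .
qed

lemma qJ_neg: "qJ P (- J) = qJ P J"
  using exch_meas[of UNIV J] by (simp add: qJ_def)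

lemma shift:
  assumes "J \<in> calJ P"
  shows "\<bar>measure P {x. fst x \<in> A} - measure P {x. fst x - J \<in> A}\<bar> \<le> uJ P J + uJ P (- J)"
proof -
  have q: "qJ P J > 0" using assms by (simp add: calJ_def)
  have a: "\<bar>measure P {x. fst x \<in> A \<and> xi x = J} - qJ P J * measure P {x. fst x \<in> A}\<bar> \<le> DJ P J"
    by (rule EA)
  have b: "\<bar>measure P {x. fst x \<in> A \<and> xi x = J} - qJ P J * measure P {x. fst x - J \<in> A}\<bar> \<le> DJ P (- J)"
    using EA[of "{v. v - J \<in> A}" "- J"] by (simp add: exch_meas[of A J] qJ_neg)
  have "\<bar>qJ P J * measure P {x. fst x \<in> A} - qJ P J * measure P {x. fst x - J \<in> A}\<bar> \<le> DJ P J + DJ P (- J)"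
    using a b q by (simp add: abs_le_iff)
  then have "qJ P J * \<bar>measure P {x. fst x \<in> A} - measure P {x. fst x - J \<in> A}\<bar> \<le> DJ P J + DJ P (- J)"
    using q by (simp add: abs_mult right_diff_distrib[symmetric])
  then show ?thesis using q
    by (simp add: uJ_DJ qJ_neg add_divide_distrib[symmetric] le_divide_eq mult.commute)
qed

lemma shift2:
  assumes "J \<in> calJ P"
  shows "\<bar>measure P {x. fst x + (c + J) \<in> A} - measure P {x. fst x + c \<in> A}\<bar> \<le> uJ P J + uJ P (- J)"
  using shift[OF assms, of "{v. v + (c + J) \<in> A}"] by (simp add: algebra_simps)

lemma shift_list:
  assumes "set L \<subseteq> calJ P"
  shows "\<bar>measure P {x. fst x + (c + sum_list L) \<in> A} - measure P {x. fst x + c \<in> A}\<bar>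
     \<le> sum_list (map (\<lambda>J. uJ P J + uJ P (- J)) L)"
  using assms
proof (induction L arbitrary: c)
  case Nil
  then show ?case by simp
next
  case (Cons J L)
  have 1: "\<bar>measure P {x. fst x + ((c + J) + sum_list L) \<in> A} - measure P {x. fst x + (c + J) \<in> A}\<bar>
     \<le> sum_list (map (\<lambda>J. uJ P J + uJ P (- J)) L)"
    using Cons by auto
  have 2: "\<bar>measure P {x. fst x + (c + J) \<in> A} - measure P {x. fst x + c \<in> A}\<bar> \<le> uJ P J + uJ P (- J)"
    using Cons by (intro shift2) auto
  show ?case using 1 2 by (simp add: add.assoc abs_le_iff)
qed



lemma part1:
  assumes "set L \<subseteq> calJ P" "sum_list L = e"
  shows "dTV (map_pmf (\<lambda>x. fst x + e) P) (lawW P) \<le> sum_list (map (\<lambda>J. uJ P J + uJ P (- J)) L)"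
  unfolding dTV_def
proof (rule cSUP_least)
  fix A
  show "\<bar>measure (map_pmf (\<lambda>x. fst x + e) P) A - measure (lawW P) A\<bar> \<le> sum_list (map (\<lambda>J. uJ P J + uJ P (- J)) L)"
    using shift_list[OF assms(1), of 0 A] assms(2) by (simp add: lawW_def vimage_def)
qed simp

lemma cond_part:
  assumes "J \<in> calJ P"
  shows "\<bar>measure (cond_pmf P {x. xi x = J}) {x. fst x + c \<in> A} - measure P {x. fst x + c \<in> A}\<bar> \<le> uJ P J"
proof -
  have q: "qJ P J > 0" using assms by (simp add: calJ_def)
  then have ne: "set_pmf P \<inter> {x. xi x = J} \<noteq> {}"
    by (auto simp: qJ_def measure_pmf_zero_iff[symmetric])
  have m: "measure (cond_pmf P {x. xi x = J}) {x. fst x + c \<in> A} = measure P {x. fst x \<in> {v. v + c \<in> A} \<and> xi x = J} / qJ P J"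
    by (simp add: measure_cond[OF ne] qJ_def Int_def conj_commute)
  have "\<bar>measure P {x. fst x \<in> {v. v + c \<in> A} \<and> xi x = J} - qJ P J * measure P {x. fst x + c \<in> A}\<bar> \<le> DJ P J"
    using EA[of "{v. v + c \<in> A}" J] by simp
  note h = this
  have "\<bar>measure P {x. fst x \<in> {v. v + c \<in> A} \<and> xi x = J} / qJ P J - measure P {x. fst x + c \<in> A}\<bar> \<le> DJ P J / qJ P J"
  proof -
    have e: "measure P {x. fst x \<in> {v. v + c \<in> A} \<and> xi x = J} / qJ P J - measure P {x. fst x + c \<in> A}
       = (measure P {x. fst x \<in> {v. v + c \<in> A} \<and> xi x = J} - qJ P J * measure P {x. fst x + c \<in> A}) / qJ P J"
      using q by (simp add: field_simps)
    show ?thesis unfolding e using q h by (auto intro!: divide_right_mono)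
  qed
  then show ?thesis by (simp add: m uJ_DJ)
qed

lemma part2:
  assumes "set L \<subseteq> calJ P" "sum_list L = e" "J \<in> calJ P"
  shows "dTV (map_pmf (\<lambda>x. fst x + e) (cond_pmf P {x. xi x = J})) (map_pmf fst (cond_pmf P {x. xi x = J}))
     \<le> sum_list (map (\<lambda>J. uJ P J + uJ P (- J)) L) + 2 * uJ P J"
  unfolding dTV_def
proof (rule cSUP_least)
  fix A
  have 1: "\<bar>measure P {x. fst x + e \<in> A} - measure P {x. fst x + 0 \<in> A}\<bar> \<le> sum_list (map (\<lambda>J. uJ P J + uJ P (- J)) L)"
    using shift_list[OF assms(1), of 0 A] assms(2) by simp
  have 2: "\<bar>measure (cond_pmf P {x. xi x = J}) {x. fst x + e \<in> A} - measure P {x. fst x + e \<in> A}\<bar> \<le> uJ P J"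
    by (rule cond_part[OF assms(3)])
  have 3: "\<bar>measure (cond_pmf P {x. xi x = J}) {x. fst x + 0 \<in> A} - measure P {x. fst x + 0 \<in> A}\<bar> \<le> uJ P J"
    by (rule cond_part[OF assms(3)])
  show "\<bar>measure (map_pmf (\<lambda>x. fst x + e) (cond_pmf P {x. xi x = J})) A - measure (map_pmf fst (cond_pmf P {x. xi x = J})) A\<bar>
     \<le> sum_list (map (\<lambda>J. uJ P J + uJ P (- J)) L) + 2 * uJ P J"
    using 1 2 3 by (simp add: vimage_def abs_le_iff)
qed simp
end

end
theorem lemma4p3:
  fixes P :: "((int^'d::finite) \<times> (int^'d)) pmf"
    and Jsel :: "'d \<Rightarrow> (int^'d) list"
  assumes exch: "map_pmf (\<lambda>(w, w'). (w', w)) P = P"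
    and second_moment: "integrable (measure_pmf P)
          (\<lambda>x. \<Sum>i\<in>UNIV. (real_of_int ((xi x) $ i))^2)"
    and Jsel_in: "\<And>j. set (Jsel j) \<subseteq> calJ P"
    and Jsel_sum: "\<And>j. sum_list (Jsel j) = unitv j"
  shows "(\<forall>j. \<forall>J\<in>calJ P.
      dTV (map_pmf (\<lambda>x. fst x + unitv j) P) (lawW P) \<le> utilde P Jsel j
    \<and> utilde P Jsel j \<le> utilde_star P Jsel
    \<and> dTV (map_pmf (\<lambda>x. fst x + unitv j) (cond_pmf P {x. xi x = J}))
          (map_pmf fst (cond_pmf P {x. xi x = J})) \<le> utilde P Jsel j + 2 * uJ P J
    \<and> utilde P Jsel j + 2 * uJ P J \<le> utilde_star P Jsel + 2 * ustar P)
    \<and> measure_pmf.expectation (lawW P) (\<lambda>w. norm1 (R2 P w))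
          \<le> real CARD('d) * trace_mat (sigma2 P) * ustar P"
proof -
  have unz: "unitv j \<noteq> 0" for j :: 'd
  proof
    assume "unitv j = 0"
    then have "unitv j $ j = 0" by simp
    then show False by (simp add: unitv_def)
  qed
  obtain j0 :: 'd where True by simp
  have "Jsel j0 \<noteq> []" using Jsel_sum[of j0] unz[of j0] by auto
  then obtain J0 where "J0 \<in> set (Jsel j0)" by (cases "Jsel j0") auto
  then have J0: "J0 \<in> calJ P" using Jsel_in by auto
  have us: "0 \<le> ustar P" using uJ_nonneg[of P J0] uJ_le_ustar[OF J0] by linarith
  have tr: "0 \<le> trace_mat (sigma2 P)"
    by (simp add: trace_eq[OF second_moment] sum_nonneg)
  have iii: "measure_pmf.expectation (lawW P) (\<lambda>w. norm1 (R2 P w))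
          \<le> real CARD('d) * trace_mat (sigma2 P) * ustar P"
  proof -
    have "measure_pmf.expectation (lawW P) (\<lambda>w. norm1 (R2 P w)) = enn2real (\<integral>\<^sup>+ w. ennreal (norm1 (R2 P w)) \<partial>lawW P)"
      by (rule integral_eq_nn_integral) (auto simp: norm1_def sum_nonneg)
    also have "\<dots> \<le> real CARD('d) * trace_mat (sigma2 P) * ustar P"
      by (rule enn2real_leI) (use us tr main3[OF second_moment us] in auto)
    finally show ?thesis .
  qed
  have fin: "finite (range (utilde P Jsel))" by (rule finite_imageI) simp
  show ?thesis
  proof (intro conjI allI ballI iii)
    fix j J assume J: "J \<in> calJ P"
    show "dTV (map_pmf (\<lambda>x. fst x + unitv j) P) (lawW P) \<le> utilde P Jsel j"
      unfolding utilde_def by (rule part1[OF exch Jsel_in Jsel_sum])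
    show u: "utilde P Jsel j \<le> utilde_star P Jsel"
      unfolding utilde_star_def using fin by (intro Max_ge) auto
    show "dTV (map_pmf (\<lambda>x. fst x + unitv j) (cond_pmf P {x. xi x = J}))
          (map_pmf fst (cond_pmf P {x. xi x = J})) \<le> utilde P Jsel j + 2 * uJ P J"
      unfolding utilde_def by (rule part2[OF exch Jsel_in Jsel_sum J])
    show "utilde P Jsel j + 2 * uJ P J \<le> utilde_star P Jsel + 2 * ustar P"
      using u uJ_le_ustar[OF J] by simp
  qed
qed

end
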